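(* (i) The subalgebras $U_e^+$ and $U_e^-$ are invariant under $S_{e_0}$ and $\tilde S_{e_0}$; the subalgebras $U_f^+$ and $U_f^-$ are invariant under $S_{f_0}$ and $\tilde S_{f_0}$. (ii) For all $x\in U_e$: $P_e^\pm S_{e_0}(x)=S_{e_0}P_e^\pm(x)$ and $P_e^\pm\tilde S_{e_0}(x)=\tilde S_{e_0}P_e^\pm(x)$; for all $x\in U_f$: $P_f^\pm S_{f_0}(x)=S_{f_0}P_f^\pm(x)$ and $P_f^\pm\tilde S_{f_0}(x)=\tilde S_{f_0}P_f^\pm(x)$.
   Context: $U=U_q(\widehat{\mathfrak{sl}}_2)$ in the Drinfeld new realization with currents $e(z)=\sum e_nz^{-n}$, $f(z)=\sum f_nz^{-n}$, relations $(z-q^2w)e(z)e(w)=(q^2z-w)e(w)e(z)$, $(z-q^{-2}w)f(z)f(w)=(q^{-2}z-w)f(w)f(z)$, $k=\psi_0^+$ with $ke_nk^{-1}=q^2e_n$, $kf_nk^{-1}=q^{-2}f_n$; counit $\varepsilon(e_n)=\varepsilon(f_n)=0$, $\varepsilon(k)=1$; $q$ not a root of unity. $U_e$ ($U_f$) is the subalgebra generated by all $e_n$ (all $f_n$); $U_e^+$, $U_e^-$ are generated by $e_n$, $n\ge0$, resp. $n<0$; $U_f^+$, $U_f^-$ by $f_n$, $n>0$, resp. $n\le0$. Multiplication gives linear isomorphisms $U_e^-\otimes U_e^+\to U_e$ and $U_f^-\otimes U_f^+\to U_f$, and the projections are $P_e^-(a_1a_2)=a_1\varepsilon(a_2)$,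 $P_e^+(a_1a_2)=\varepsilon(a_1)a_2$ for $a_1\in U_e^-,a_2\in U_e^+$, and $P_f^-(a_1a_2)=a_1\varepsilon(a_2)$, $P_f^+(a_1a_2)=\varepsilon(a_1)a_2$ for $a_1\in U_f^-,a_2\in U_f^+$. Screenings: $S_{e_0}(x)=e_0x-kxk^{-1}e_0$, $S_{f_0}(x)=xf_0-f_0kxk^{-1}$, $\tilde S_{e_0}(x)=xe_0-e_0k^{-1}xk$, $\tilde S_{f_0}(x)=f_0x-k^{-1}xkf_0$. *)

theory Defs
  imports Main
begin

text \<open>An associative unital algebra over a field 'k is modelled as a ring 'a together
with a central unital ring homomorphism sc : 'k => 'a (scalar c acts as sc c * _).\<close>

definition scalar_embedding :: "('k::field \<Rightarrow> 'a::ring_1) \<Rightarrow> bool" where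
  "scalar_embedding sc \<longleftrightarrow>
     sc 0 = 0 \<and> sc 1 = 1 \<and> (\<forall>a b. sc (a + b) = sc a + sc b) \<and>
     (\<forall>a b. sc (a * b) = sc a * sc b) \<and> (\<forall>c x. sc c * x = x * sc c)"

inductive_set subalg :: "('k \<Rightarrow> 'a::ring_1) \<Rightarrow> 'a set \<Rightarrow> 'a set"
  for sc :: "'k \<Rightarrow> 'a" and G :: "'a set" where
  scal: "sc c \<in> subalg sc G"
| gen: "x \<in> G \<Longrightarrow> x \<in> subalg sc G"
| add: "x \<in> subalg sc G \<Longrightarrow> y \<in> subalg sc G \<Longrightarrow> x + y \<in> subalg sc G"
| mult: "x \<in> subalg sc G \<Longrightarrow> y \<in> subalg sc G \<Longrightarrow> x * y \<in> subalg sc G"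

definition lin_indep :: "('k::field \<Rightarrow> 'a::ring_1) \<Rightarrow> 'a list \<Rightarrow> bool" where
  "lin_indep sc as \<longleftrightarrow>
     (\<forall>cs. length cs = length as \<longrightarrow>
        (\<Sum>i<length as. sc (cs ! i) * as ! i) = 0 \<longrightarrow> (\<forall>i<length as. cs ! i = 0))"

text \<open>Multiplication gives a linear isomorphism A \<otimes> B \<rightarrow> C (A, B, C subspaces):
  surjectivity: every element of C is a finite sum of products a*b with a in A, b in B;
  injectivity: a sum of a_i*b_i with (a_i) linearly independent vanishes only if all b_i = 0;
  and the image lies in C.\<close>
definition mult_iso :: "('k::field \<Rightarrow> 'a::ring_1) \<Rightarrow> 'a set \<Rightarrow> 'a set \<Rightarrow> 'a set \<Rightarrow> bool" where
  "mult_iso sc A B C \<longleftrightarrow>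
     (\<forall>a\<in>A. \<forall>b\<in>B. a * b \<in> C) \<and>
     (\<forall>x\<in>C. \<exists>ps. set ps \<subseteq> A \<times> B \<and> x = sum_list (map (\<lambda>(a, b). a * b) ps)) \<and>
     (\<forall>ps. set ps \<subseteq> A \<times> B \<longrightarrow> lin_indep sc (map fst ps) \<longrightarrow>
        sum_list (map (\<lambda>(a, b). a * b) ps) = 0 \<longrightarrow> (\<forall>p\<in>set ps. snd p = 0))"

definition linear_on :: "('k::field \<Rightarrow> 'a::ring_1) \<Rightarrow> 'a set \<Rightarrow> ('a \<Rightarrow> 'a) \<Rightarrow> bool" where
  "linear_on sc C P \<longleftrightarrow>
     (\<forall>x\<in>C. \<forall>y\<in>C. P (x + y) = P x + P y) \<and> (\<forall>c. \<forall>x\<in>C. P (sc c * x) = sc c * P x)"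

text \<open>The defining data of U_q(sl2-hat) relevant to the statement: currents e, f
  (e n = e_n, f n = f_n), k = psi_0^+ with inverse kinv, counit eps.\<close>
definition Uq_data ::
  "('k::field_char_0 \<Rightarrow> 'a::ring_1) \<Rightarrow> 'k \<Rightarrow> (int \<Rightarrow> 'a) \<Rightarrow> (int \<Rightarrow> 'a) \<Rightarrow> 'a \<Rightarrow> 'a
     \<Rightarrow> ('a \<Rightarrow> 'k) \<Rightarrow> bool" where
  "Uq_data sc q e f k kinv eps \<longleftrightarrow>
     scalar_embedding sc \<and>
     q \<noteq> 0 \<and> (\<forall>n::nat. n > 0 \<longrightarrow> q ^ n \<noteq> 1) \<and>
     \<comment> \<open>(z - q^2 w) e(z) e(w) = (q^2 z - w) e(w) e(z), in modes\<close>
     (\<forall>m n. e (m + 1) * e n - sc (q^2) * e m * e (n + 1)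
            = sc (q^2) * e n * e (m + 1) - e (n + 1) * e m) \<and>
     \<comment> \<open>(z - q^-2 w) f(z) f(w) = (q^-2 z - w) f(w) f(z), in modes\<close>
     (\<forall>m n. f (m + 1) * f n - sc (inverse (q^2)) * f m * f (n + 1)
            = sc (inverse (q^2)) * f n * f (m + 1) - f (n + 1) * f m) \<and>
     k * kinv = 1 \<and> kinv * k = 1 \<and>
     (\<forall>n. k * e n * kinv = sc (q^2) * e n) \<and>
     (\<forall>n. k * f n * kinv = sc (inverse (q^2)) * f n) \<and>
     \<comment> \<open>counit: unital algebra homomorphism to the ground field\<close>
     (\<forall>c. eps (sc c) = c) \<and> (\<forall>x y. eps (x + y) = eps x + eps y) \<and>
     (\<forall>x y. eps (x * y) = eps x * eps y) \<and>
     (\<forall>n. eps (e n) = 0) \<and> (\<forall>n. eps (f n) = 0) \<and> eps k = 1"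

definition Ue :: "('k \<Rightarrow> 'a::ring_1) \<Rightarrow> (int \<Rightarrow> 'a) \<Rightarrow> 'a set" where
  "Ue sc e = subalg sc (range e)"
definition Ue_plus :: "('k \<Rightarrow> 'a::ring_1) \<Rightarrow> (int \<Rightarrow> 'a) \<Rightarrow> 'a set" where
  "Ue_plus sc e = subalg sc (e ` {n. n \<ge> 0})"
definition Ue_minus :: "('k \<Rightarrow> 'a::ring_1) \<Rightarrow> (int \<Rightarrow> 'a) \<Rightarrow> 'a set" where
  "Ue_minus sc e = subalg sc (e ` {n. n < 0})"
definition Uf :: "('k \<Rightarrow> 'a::ring_1) \<Rightarrow> (int \<Rightarrow> 'a) \<Rightarrow> 'a set" where
  "Uf sc f = subalg sc (range f)"
definition Uf_plus :: "('k \<Rightarrow> 'a::ring_1) \<Rightarrow> (int \<Rightarrow> 'a) \<Rightarrow> 'a set" where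
  "Uf_plus sc f = subalg sc (f ` {n. n > 0})"
definition Uf_minus :: "('k \<Rightarrow> 'a::ring_1) \<Rightarrow> (int \<Rightarrow> 'a) \<Rightarrow> 'a set" where
  "Uf_minus sc f = subalg sc (f ` {n. n \<le> 0})"

definition S_e0 :: "(int \<Rightarrow> 'a::ring_1) \<Rightarrow> 'a \<Rightarrow> 'a \<Rightarrow> 'a \<Rightarrow> 'a" where
  "S_e0 e k kinv x = e 0 * x - (k * x * kinv) * e 0"
definition S_f0 :: "(int \<Rightarrow> 'a::ring_1) \<Rightarrow> 'a \<Rightarrow> 'a \<Rightarrow> 'a \<Rightarrow> 'a" where
  "S_f0 f k kinv x = x * f 0 - f 0 * (k * x * kinv)"
definition tS_e0 :: "(int \<Rightarrow> 'a::ring_1) \<Rightarrow> 'a \<Rightarrow> 'a \<Rightarrow> 'a \<Rightarrow> 'a" where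
  "tS_e0 e k kinv x = x * e 0 - e 0 * (kinv * x * k)"
definition tS_f0 :: "(int \<Rightarrow> 'a::ring_1) \<Rightarrow> 'a \<Rightarrow> 'a \<Rightarrow> 'a \<Rightarrow> 'a" where
  "tS_f0 f k kinv x = f 0 * x - (kinv * x * k) * f 0"

definition is_proj_minus ::
  "('k::field \<Rightarrow> 'a::ring_1) \<Rightarrow> ('a \<Rightarrow> 'k) \<Rightarrow> 'a set \<Rightarrow> 'a set \<Rightarrow> 'a set \<Rightarrow> ('a \<Rightarrow> 'a) \<Rightarrow> bool" where
  "is_proj_minus sc eps Am Ap C P \<longleftrightarrow> linear_on sc C P \<and>
     (\<forall>a1\<in>Am. \<forall>a2\<in>Ap. P (a1 * a2) = a1 * sc (eps a2))"
definition is_proj_plus ::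
  "('k::field \<Rightarrow> 'a::ring_1) \<Rightarrow> ('a \<Rightarrow> 'k) \<Rightarrow> 'a set \<Rightarrow> 'a set \<Rightarrow> 'a set \<Rightarrow> ('a \<Rightarrow> 'a) \<Rightarrow> bool" where
  "is_proj_plus sc eps Am Ap C P \<longleftrightarrow> linear_on sc C P \<and>
     (\<forall>a1\<in>Am. \<forall>a2\<in>Ap. P (a1 * a2) = sc (eps a1) * a2)"

end

theory Submission
  imports Defs
begin

lemma se_facts:
  assumes "scalar_embedding sc"
  shows "sc 0 = 0" "sc 1 = 1" "sc (a+b) = sc a + sc b" "sc (a*b) = sc a * sc b"
    "sc c * x = x * sc c"
  using assms unfolding scalar_embedding_def by blast+

lemma se_neg1:
  assumes "scalar_embedding sc" shows "sc (-1) = -1"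
proof -
  have "sc (-1) + sc 1 = sc 0" using se_facts(3)[OF assms, of "-1" 1] by simp
  then show ?thesis using se_facts(1,2)[OF assms] by (simp add: add_eq_0_iff2)
qed

lemma subalg_zero: "scalar_embedding sc \<Longrightarrow> 0 \<in> subalg sc G"
  using subalg.scal[of sc 0 G] se_facts(1) by metis

lemma subalg_smul: "x \<in> subalg sc G \<Longrightarrow> sc c * x \<in> subalg sc G"
  by (rule subalg.mult[OF subalg.scal])

lemma subalg_diff:
  assumes "scalar_embedding sc" "x \<in> subalg sc G" "y \<in> subalg sc G"
  shows "x - y \<in> subalg sc G"
proof -
  have "x - y = x + sc (-1) * y" using se_neg1[OF assms(1)] by simp
  then show ?thesis using assms by (metis subalg.add subalg_smul)
qed

lemma subalg_mono:
  assumes "G \<subseteq> H" "x \<in> subalg sc G" shows "x \<in> subalg sc H"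
  using assms(2) by (induction x rule: subalg.induct) (use assms(1) in \<open>auto intro: subalg.intros\<close>)

lemma conj_pres:
  assumes se: "scalar_embedding sc" and uv: "u*v = 1" "v*u = 1"
    and gen_ok: "\<And>g. g\<in>G \<Longrightarrow> u*g*v \<in> subalg sc G"
    and x: "x \<in> subalg sc G"
  shows "u*x*v \<in> subalg sc G"
  using x
proof (induction x rule: subalg.induct)
  case (scal c)
  have "u * sc c * v = sc c * (u*v)" using se_facts(5)[OF se, of c u]
    by (metis mult.assoc)
  then show ?case using uv by (simp add: subalg.scal)
next
  case (gen x) then show ?case using gen_ok by blast
next
  case (add x y)
  have "u*(x+y)*v = u*x*v + u*y*v" by (simp add: algebra_simps)
  then show ?case using add by (simp add: subalg.add)
next
  case (mult x y)
  have "u*(x*y)*v = (u*x*v)*(u*y*v)"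
  proof -
    have "(u*x*v)*(u*y*v) = u*x*(v*u)*y*v" by (simp add: mult.assoc)
    then show ?thesis using uv by (simp add: mult.assoc)
  qed
  then show ?case using mult by (simp add: subalg.mult)
qed

lemma deriv_pres:
  assumes se: "scalar_embedding sc"
    and Dsc: "\<And>c. D (sc c) = 0"
    and Dadd: "\<And>x y. D (x+y) = D x + D y"
    and Dmul: "\<And>x y. D (x*y) = \<alpha> x * D y + D x * \<beta> y"
    and \<alpha>: "\<And>x. x \<in> subalg sc G \<Longrightarrow> \<alpha> x \<in> subalg sc G"
    and \<beta>: "\<And>x. x \<in> subalg sc G \<Longrightarrow> \<beta> x \<in> subalg sc G"
    and gen_ok: "\<And>g. g\<in>G \<Longrightarrow> D g \<in> subalg sc G"
    and x: "x \<in> subalg sc G"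
  shows "D x \<in> subalg sc G"
  using x
proof (induction x rule: subalg.induct)
  case (scal c) then show ?case using Dsc subalg_zero[OF se] by simp
next
  case (gen x) then show ?case using gen_ok by blast
next
  case (add x y) then show ?case using Dadd by (simp add: subalg.add)
next
  case (mult x y) then show ?case using Dmul \<alpha> \<beta> by (simp add: subalg.add subalg.mult)
qed

lemma P_zero:
  assumes "linear_on sc C P" "(0::'a::ring_1) \<in> C" shows "P 0 = 0"
proof -
  have "P (0+0) = P 0 + P 0" using assms unfolding linear_on_def by blast
  then show ?thesis by simp
qed

lemma P_sum_list:
  assumes lin: "linear_on sc C P" and z: "(0::'a::ring_1) \<in> C"
    and cl: "\<And>x y. x\<in>C \<Longrightarrow> y\<in>C \<Longrightarrow> x+y \<in> C"
  shows "set xs \<subseteq> C \<Longrightarrow> P (sum_list xs) = sum_list (map P xs) \<and> sum_list xs \<in> C"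
proof (induction xs)
  case Nil then show ?case using P_zero[OF lin z] z by simp
next
  case (Cons a xs)
  then show ?case using lin cl unfolding linear_on_def by auto
qed

lemma D_sum_list:
  assumes "\<And>x y. D (x+y) = D x + D y" "D 0 = (0::'a::ring_1)"
  shows "D (sum_list xs) = sum_list (map D xs)"
  by (induction xs) (auto simp: assms)

lemma proj_comm_generic:
  fixes P D :: "'a::ring_1 \<Rightarrow> 'a"
  assumes surj: "\<forall>x\<in>C. \<exists>ps. set ps \<subseteq> A \<times> B \<and> x = sum_list (map (\<lambda>(a, b). a * b) ps)"
    and AC: "A \<subseteq> C" and BC: "B \<subseteq> C"
    and cladd: "\<And>x y. x\<in>C \<Longrightarrow> y\<in>C \<Longrightarrow> x+y \<in> C"
    and clmul: "\<And>x y. x\<in>C \<Longrightarrow> y\<in>C \<Longrightarrow> x*y \<in> C"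
    and z: "0 \<in> C"
    and lin: "linear_on sc C P"
    and Dadd: "\<And>x y. D (x+y) = D x + D y" and D0: "D 0 = 0"
    and Dmul: "\<And>x y. D (x*y) = \<alpha> x * D y + D x * \<beta> y"
    and DA: "\<And>a. a\<in>A \<Longrightarrow> D a \<in> A" and DB: "\<And>b. b\<in>B \<Longrightarrow> D b \<in> B"
    and \<alpha>A: "\<And>a. a\<in>A \<Longrightarrow> \<alpha> a \<in> A" and \<beta>B: "\<And>b. b\<in>B \<Longrightarrow> \<beta> b \<in> B"
    and key: "\<And>a b. a\<in>A \<Longrightarrow> b\<in>B \<Longrightarrow> P (\<alpha> a * D b) + P (D a * \<beta> b) = D (P (a*b))"
    and x: "x \<in> C"
  shows "P (D x) = D (P x)"
proof -
  obtain ps where ps: "set ps \<subseteq> A \<times> B" "x = sum_list (map (\<lambda>(a, b). a * b) ps)"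
    using surj x by blast
  define zs where "zs = map (\<lambda>(a, b). a * b) ps"
  have zsC: "set zs \<subseteq> C" using ps AC BC unfolding zs_def by (auto intro!: clmul)
  have Dzs: "set (map D zs) \<subseteq> C"
  proof
    fix w assume "w \<in> set (map D zs)"
    then obtain a b where ab: "(a,b) \<in> set ps" "w = D (a*b)" unfolding zs_def by auto
    then have "a\<in>A" "b\<in>B" using ps by auto
    then have "\<alpha> a \<in> C" "D b \<in> C" "D a \<in> C" "\<beta> b \<in> C" using DA DB \<alpha>A \<beta>B AC BC by auto
    then show "w \<in> C" using ab Dmul cladd clmul by auto
  qed
  have "P (D x) = sum_list (map P (map D zs))"
    using P_sum_list[OF lin z cladd Dzs] ps(2) D_sum_list[OF Dadd D0] unfolding zs_def by simp
  also have "\<dots> = sum_list (map D (map P zs))"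
  proof -
    have eq: "\<And>p. p \<in> set ps \<Longrightarrow> P (D ((\<lambda>(a, b). a * b) p)) = D (P ((\<lambda>(a, b). a * b) p))"
    proof -
      fix p assume "p \<in> set ps"
      then obtain a b where ab: "p = (a,b)" "a\<in>A" "b\<in>B" using ps by (cases p) auto
      have "P (D (a*b)) = P (\<alpha> a * D b) + P (D a * \<beta> b)"
        using Dmul lin ab \<alpha>A \<beta>B DA DB AC BC clmul unfolding linear_on_def by (metis subsetD)
      then show "P (D ((\<lambda>(a, b). a * b) p)) = D (P ((\<lambda>(a, b). a * b) p))"
        using key ab by simp
    qed
    have "map P (map D zs) = map D (map P zs)"
      using eq unfolding zs_def by simp
    then show ?thesis by (rule arg_cong)
  qed
  also have "\<dots> = D (P x)"
    using P_sum_list[OF lin z cladd zsC] ps(2) D_sum_list[OF Dadd D0] unfolding zs_def by simp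
  finally show ?thesis .
qed


lemma package:
  fixes D \<alpha> \<beta> Pm Pp :: "'a::ring_1 \<Rightarrow> 'a" and sc :: "'k::field \<Rightarrow> 'a"
  assumes se: "scalar_embedding sc" and GAG: "GA \<subseteq> G" and GBG: "GB \<subseteq> G"
    and iso: "mult_iso sc (subalg sc GA) (subalg sc GB) (subalg sc G)"
    and Pm: "is_proj_minus sc eps (subalg sc GA) (subalg sc GB) (subalg sc G) Pm"
    and Pp: "is_proj_plus sc eps (subalg sc GA) (subalg sc GB) (subalg sc G) Pp"
    and Dadd: "\<And>x y. D (x+y) = D x + D y"
    and Dmul: "\<And>x y. D (x*y) = \<alpha> x * D y + D x * \<beta> y"
    and Dsc: "\<And>c. D (sc c) = 0"
    and \<alpha>sc: "\<And>c. \<alpha> (sc c) = sc c" and \<beta>sc: "\<And>c. \<beta> (sc c) = sc c"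
    and eps\<alpha>: "\<And>x. eps (\<alpha> x) = eps x" and eps\<beta>: "\<And>x. eps (\<beta> x) = eps x"
    and epsD: "\<And>x. eps (D x) = 0"
    and \<alpha>A: "\<And>x. x \<in> subalg sc GA \<Longrightarrow> \<alpha> x \<in> subalg sc GA"
    and \<beta>B: "\<And>x. x \<in> subalg sc GB \<Longrightarrow> \<beta> x \<in> subalg sc GB"
    and DA: "\<And>x. x \<in> subalg sc GA \<Longrightarrow> D x \<in> subalg sc GA"
    and DB: "\<And>x. x \<in> subalg sc GB \<Longrightarrow> D x \<in> subalg sc GB"
  shows "\<forall>x\<in>subalg sc G. Pm (D x) = D (Pm x) \<and> Pp (D x) = D (Pp x)"
proof
  fix x assume x: "x \<in> subalg sc G"
  have AC: "subalg sc GA \<subseteq> subalg sc G" using subalg_mono[OF GAG] by blast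
  have BC: "subalg sc GB \<subseteq> subalg sc G" using subalg_mono[OF GBG] by blast
  have surj: "\<forall>x\<in>subalg sc G. \<exists>ps. set ps \<subseteq> subalg sc GA \<times> subalg sc GB \<and> x = sum_list (map (\<lambda>(a, b). a * b) ps)"
    using iso unfolding mult_iso_def by blast
  have z: "0 \<in> subalg sc G" using subalg_zero[OF se] .
  have D0: "D 0 = 0" using Dsc[of 0] se_facts(1)[OF se] by simp
  have s0: "sc 0 = 0" using se_facts(1)[OF se] .
  have linm: "linear_on sc (subalg sc G) Pm" using Pm unfolding is_proj_minus_def by blast
  have linp: "linear_on sc (subalg sc G) Pp" using Pp unfolding is_proj_plus_def by blast
  have Pmab: "\<And>a b. a \<in> subalg sc GA \<Longrightarrow> b \<in> subalg sc GB \<Longrightarrow> Pm (a*b) = a * sc (eps b)"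
    using Pm unfolding is_proj_minus_def by blast
  have Ppab: "\<And>a b. a \<in> subalg sc GA \<Longrightarrow> b \<in> subalg sc GB \<Longrightarrow> Pp (a*b) = sc (eps a) * b"
    using Pp unfolding is_proj_plus_def by blast
  have "Pm (D x) = D (Pm x)"
  proof (rule proj_comm_generic[OF surj AC BC _ _ z linm Dadd D0 Dmul DA DB \<alpha>A \<beta>B _ x])
    fix a b assume a: "a \<in> subalg sc GA" and b: "b \<in> subalg sc GB"
    have "Pm (\<alpha> a * D b) = 0" using Pmab[OF \<alpha>A[OF a] DB[OF b]] epsD s0 by simp
    moreover have "Pm (D a * \<beta> b) = D a * sc (eps b)" using Pmab[OF DA[OF a] \<beta>B[OF b]] eps\<beta> by simp
    moreover have "D (Pm (a*b)) = D a * sc (eps b)" using Pmab[OF a b] Dmul Dsc \<beta>sc by simp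
    ultimately show "Pm (\<alpha> a * D b) + Pm (D a * \<beta> b) = D (Pm (a * b))" by simp
  qed (auto intro: subalg.intros)
  moreover have "Pp (D x) = D (Pp x)"
  proof (rule proj_comm_generic[OF surj AC BC _ _ z linp Dadd D0 Dmul DA DB \<alpha>A \<beta>B _ x])
    fix a b assume a: "a \<in> subalg sc GA" and b: "b \<in> subalg sc GB"
    have "Pp (\<alpha> a * D b) = sc (eps a) * D b" using Ppab[OF \<alpha>A[OF a] DB[OF b]] eps\<alpha> by simp
    moreover have "Pp (D a * \<beta> b) = 0" using Ppab[OF DA[OF a] \<beta>B[OF b]] epsD s0 by simp
    moreover have "D (Pp (a*b)) = sc (eps a) * D b" using Ppab[OF a b] Dmul Dsc \<alpha>sc by simp
    ultimately show "Pp (\<alpha> a * D b) + Pp (D a * \<beta> b) = D (Pp (a * b))" by simp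
  qed (auto intro: subalg.intros)
  ultimately show "Pm (D x) = D (Pm x) \<and> Pp (D x) = D (Pp x)" by simp
qed

lemma conj_inv:
  assumes se: "scalar_embedding sc" and kk1: "k*kinv = 1" and kk2: "kinv*k = 1"
    and h: "k*x*kinv = sc c * x" and c: "c \<noteq> 0"
  shows "kinv*x*k = sc (inverse c) * x"
proof -
  have "kinv*(k*x*kinv)*k = (kinv*k)*x*(kinv*k)" by (simp add: mult.assoc)
  then have "x = kinv*(k*x*kinv)*k" using kk2 by simp
  also have "\<dots> = sc c * (kinv*x*k)" using h se_facts(5)[OF se, of c kinv] by (metis mult.assoc)
  finally have "sc (inverse c) * x = sc (inverse c) * sc c * (kinv*x*k)" by (simp add: mult.assoc)
  also have "\<dots> = kinv*x*k" using se_facts(2)[OF se] se_facts(4)[OF se, of "inverse c" c] c by simp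
  finally show ?thesis by simp
qed

lemma half_zero:
  fixes sc :: "'k::field_char_0 \<Rightarrow> 'a::ring_1"
  fixes X :: 'a
  assumes se: "scalar_embedding sc" and h: "X + X = 0"
  shows "X = 0"
proof -
  have "sc (inverse 2) * (X + X) = (sc (inverse 2) + sc (inverse 2)) * X" by (simp add: algebra_simps)
  also have "\<dots> = sc 1 * X" using se_facts(3)[OF se, of "inverse 2" "inverse 2"] by simp
  finally show ?thesis using h se_facts(2)[OF se] by simp
qed

lemma diff_swap: "(a::'a::ab_group_add) - b = c - d \<Longrightarrow> a - c = b - d"
  by (simp add: algebra_simps)

theorem mainTheorem6:
  fixes sc :: "'k::field_char_0 \<Rightarrow> 'a::ring_1"
    and q :: 'k and e f :: "int \<Rightarrow> 'a" and k kinv :: 'a and eps :: "'a \<Rightarrow> 'k"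
    and Pem Pep Pfm Pfp :: "'a \<Rightarrow> 'a"
  assumes U: "Uq_data sc q e f k kinv eps"
    and iso_e: "mult_iso sc (Ue_minus sc e) (Ue_plus sc e) (Ue sc e)"
    and iso_f: "mult_iso sc (Uf_minus sc f) (Uf_plus sc f) (Uf sc f)"
    and Pem: "is_proj_minus sc eps (Ue_minus sc e) (Ue_plus sc e) (Ue sc e) Pem"
    and Pep: "is_proj_plus sc eps (Ue_minus sc e) (Ue_plus sc e) (Ue sc e) Pep"
    and Pfm: "is_proj_minus sc eps (Uf_minus sc f) (Uf_plus sc f) (Uf sc f) Pfm"
    and Pfp: "is_proj_plus sc eps (Uf_minus sc f) (Uf_plus sc f) (Uf sc f) Pfp"
  shows
    "(\<forall>x\<in>Ue_plus sc e. S_e0 e k kinv x \<in> Ue_plus sc e \<and> tS_e0 e k kinv x \<in> Ue_plus sc e) \<and>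
     (\<forall>x\<in>Ue_minus sc e. S_e0 e k kinv x \<in> Ue_minus sc e \<and> tS_e0 e k kinv x \<in> Ue_minus sc e) \<and>
     (\<forall>x\<in>Uf_plus sc f. S_f0 f k kinv x \<in> Uf_plus sc f \<and> tS_f0 f k kinv x \<in> Uf_plus sc f) \<and>
     (\<forall>x\<in>Uf_minus sc f. S_f0 f k kinv x \<in> Uf_minus sc f \<and> tS_f0 f k kinv x \<in> Uf_minus sc f) \<and>
     (\<forall>x\<in>Ue sc e.
        Pem (S_e0 e k kinv x) = S_e0 e k kinv (Pem x) \<and>
        Pep (S_e0 e k kinv x) = S_e0 e k kinv (Pep x) \<and>
        Pem (tS_e0 e k kinv x) = tS_e0 e k kinv (Pem x) \<and>
        Pep (tS_e0 e k kinv x) = tS_e0 e k kinv (Pep x)) \<and>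
     (\<forall>x\<in>Uf sc f.
        Pfm (S_f0 f k kinv x) = S_f0 f k kinv (Pfm x) \<and>
        Pfp (S_f0 f k kinv x) = S_f0 f k kinv (Pfp x) \<and>
        Pfm (tS_f0 f k kinv x) = tS_f0 f k kinv (Pfm x) \<and>
        Pfp (tS_f0 f k kinv x) = tS_f0 f k kinv (Pfp x))"
  proof -
  have se: "scalar_embedding sc" using U unfolding Uq_data_def by blast
  have q0: "q \<noteq> 0" using U unfolding Uq_data_def by blast
  have erel: "\<And>m n. e (m + 1) * e n - sc (q^2) * e m * e (n + 1)
            = sc (q^2) * e n * e (m + 1) - e (n + 1) * e m" using U unfolding Uq_data_def by blast
  have frel: "\<And>m n. f (m + 1) * f n - sc (inverse (q^2)) * f m * f (n + 1)
            = sc (inverse (q^2)) * f n * f (m + 1) - f (n + 1) * f m" using U unfolding Uq_data_def by blast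
  have kk1: "k * kinv = 1" and kk2: "kinv * k = 1" using U unfolding Uq_data_def by blast+
  have ke: "\<And>n. k * e n * kinv = sc (q^2) * e n" using U unfolding Uq_data_def by blast
  have kf: "\<And>n. k * f n * kinv = sc (inverse (q^2)) * f n" using U unfolding Uq_data_def by blast
  have eps_sc: "\<And>c. eps (sc c) = c" and eps_add: "\<And>x y. eps (x + y) = eps x + eps y"
    and eps_mul: "\<And>x y. eps (x * y) = eps x * eps y"
    and eps_e: "\<And>n. eps (e n) = 0" and eps_f: "\<And>n. eps (f n) = 0" and eps_k: "eps k = 1"
    using U unfolding Uq_data_def by blast+
  define p where "p = inverse ((q::'k)^2)"
  have q2: "q^2 \<noteq> 0" using q0 by simp
  have pq: "sc p * sc (q^2) = 1" "sc (q^2) * sc p = 1"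
    using se_facts(2)[OF se] se_facts(4)[OF se, of p "q^2"] se_facts(4)[OF se, of "q^2" p] q2 unfolding p_def by simp_all
  have kie: "\<And>n. kinv * e n * k = sc p * e n"
    using conj_inv[OF se kk1 kk2 ke q2] unfolding p_def .
  have kif: "\<And>n. kinv * f n * k = sc (q^2) * f n"
    using conj_inv[OF se kk1 kk2 kf] q2 by simp
  have central: "\<And>c x. sc c * x = x * sc c" using se_facts(5)[OF se] .
  have s0: "sc 0 = 0" using se_facts(1)[OF se] .
  have eps1: "eps 1 = 1" using eps_sc[of 1] se_facts(2)[OF se] by simp
  have eps_kinv: "eps kinv = 1" using eps_mul[of k kinv] kk1 eps1 eps_k by simp
  have eps_diff: "\<And>x y. eps (x - y) = eps x - eps y"
    using eps_add by (metis add_diff_cancel eq_diff_eq)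
  have epsk: "\<And>x. eps (k*x*kinv) = eps x" "\<And>x. eps (kinv*x*k) = eps x"
    by (simp_all add: eps_mul eps_k eps_kinv)
  have ksc: "\<And>c. k * sc c * kinv = sc c" "\<And>c. kinv * sc c * k = sc c"
    by (metis central kk1 kk2 mult.assoc mult_1_right)+
  have kk3: "\<And>z. kinv * (k * z) = z" "\<And>z. k * (kinv * z) = z"
    by (metis kk1 kk2 mult.assoc mult_1_left)+
  have conj_e: "\<And>G x. G \<subseteq> range e \<Longrightarrow> x \<in> subalg sc G \<Longrightarrow>
      k*x*kinv \<in> subalg sc G \<and> kinv*x*k \<in> subalg sc G"
  proof -
    fix G x assume G: "G \<subseteq> range e" and x: "x \<in> subalg sc G"
    have "k*x*kinv \<in> subalg sc G"
    proof (rule conj_pres[OF se kk1 kk2 _ x])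
      fix g assume "g \<in> G" then obtain n where "g = e n" "e n \<in> G" using G by auto
      then show "k*g*kinv \<in> subalg sc G" using ke subalg_smul subalg.gen by metis
    qed
    moreover have "kinv*x*k \<in> subalg sc G"
    proof (rule conj_pres[OF se kk2 kk1 _ x])
      fix g assume "g \<in> G" then obtain n where "g = e n" "e n \<in> G" using G by auto
      then show "kinv*g*k \<in> subalg sc G" using kie subalg_smul subalg.gen by metis
    qed
    ultimately show "k*x*kinv \<in> subalg sc G \<and> kinv*x*k \<in> subalg sc G" by blast
  qed
  have conj_f: "\<And>G x. G \<subseteq> range f \<Longrightarrow> x \<in> subalg sc G \<Longrightarrow>
      k*x*kinv \<in> subalg sc G \<and> kinv*x*k \<in> subalg sc G"
  proof -
    fix G x assume G: "G \<subseteq> range f" and x: "x \<in> subalg sc G"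
    have "k*x*kinv \<in> subalg sc G"
    proof (rule conj_pres[OF se kk1 kk2 _ x])
      fix g assume "g \<in> G" then obtain n where "g = f n" "f n \<in> G" using G by auto
      then show "k*g*kinv \<in> subalg sc G" using kf subalg_smul subalg.gen by metis
    qed
    moreover have "kinv*x*k \<in> subalg sc G"
    proof (rule conj_pres[OF se kk2 kk1 _ x])
      fix g assume "g \<in> G" then obtain n where "g = f n" "f n \<in> G" using G by auto
      then show "kinv*g*k \<in> subalg sc G" using kif subalg_smul subalg.gen by metis
    qed
    ultimately show "k*x*kinv \<in> subalg sc G \<and> kinv*x*k \<in> subalg sc G" by blast
  qed
  let ?S = "S_e0 e k kinv" and ?T = "tS_e0 e k kinv" and ?F = "S_f0 f k kinv" and ?G = "tS_f0 f k kinv"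
  have Sadd: "\<And>x y. ?S (x+y) = ?S x + ?S y" "\<And>x y. ?T (x+y) = ?T x + ?T y"
     "\<And>x y. ?F (x+y) = ?F x + ?F y" "\<And>x y. ?G (x+y) = ?G x + ?G y"
    unfolding S_e0_def tS_e0_def S_f0_def tS_f0_def by (simp_all add: algebra_simps)
  have Smul: "\<And>x y. ?S (x*y) = (k*x*kinv) * ?S y + ?S x * id y"
     "\<And>x y. ?T (x*y) = id x * ?T y + ?T x * (kinv*y*k)"
     "\<And>x y. ?F (x*y) = id x * ?F y + ?F x * (k*y*kinv)"
     "\<And>x y. ?G (x*y) = (kinv*x*k) * ?G y + ?G x * id y"
    unfolding S_e0_def tS_e0_def S_f0_def tS_f0_def by (simp_all add: algebra_simps kk3)
  have Ssc: "\<And>c. ?S (sc c) = 0" "\<And>c. ?T (sc c) = 0" "\<And>c. ?F (sc c) = 0" "\<And>c. ?G (sc c) = 0"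
    unfolding S_e0_def tS_e0_def S_f0_def tS_f0_def using ksc central by simp_all
  have Seps: "\<And>x. eps (?S x) = 0" "\<And>x. eps (?T x) = 0" "\<And>x. eps (?F x) = 0" "\<And>x. eps (?G x) = 0"
    unfolding S_e0_def tS_e0_def S_f0_def tS_f0_def by (simp_all add: eps_diff eps_mul eps_e eps_f)
  define GEp where "GEp = e ` {n. n \<ge> 0}"
  define GEm where "GEm = e ` {n. n < 0}"
  define GFp where "GFp = f ` {n. n > 0}"
  define GFm where "GFm = f ` {n. n \<le> 0}"
  have sub: "GEp \<subseteq> range e" "GEm \<subseteq> range e" "GFp \<subseteq> range f" "GFm \<subseteq> range f"
    unfolding GEp_def GEm_def GFp_def GFm_def by auto
  have defs: "Ue_plus sc e = subalg sc GEp" "Ue_minus sc e = subalg sc GEm" "Ue sc e = subalg sc (range e)"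
    "Uf_plus sc f = subalg sc GFp" "Uf_minus sc f = subalg sc GFm" "Uf sc f = subalg sc (range f)"
    unfolding GEp_def GEm_def GFp_def GFm_def Ue_plus_def Ue_minus_def Ue_def Uf_plus_def Uf_minus_def Uf_def
    by simp_all
  have e0: "e 0 \<in> subalg sc GEp" unfolding GEp_def by (rule subalg.gen) auto
  have f0: "f 0 \<in> subalg sc GFm" unfolding GFm_def by (rule subalg.gen) auto
  have kfp: "\<And>n. k * f n * kinv = sc p * f n" using kf unfolding p_def .
  have S_Ep: "\<And>x. x \<in> subalg sc GEp \<Longrightarrow> ?S x \<in> subalg sc GEp"
    unfolding S_e0_def using conj_e[OF sub(1)] e0
    by (meson subalg.mult subalg_diff[OF se])
  have T_Ep: "\<And>x. x \<in> subalg sc GEp \<Longrightarrow> ?T x \<in> subalg sc GEp"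
    unfolding tS_e0_def using conj_e[OF sub(1)] e0
    by (meson subalg.mult subalg_diff[OF se])
  have F_Fm: "\<And>x. x \<in> subalg sc GFm \<Longrightarrow> ?F x \<in> subalg sc GFm"
    unfolding S_f0_def using conj_f[OF sub(4)] f0
    by (meson subalg.mult subalg_diff[OF se])
  have G_Fm: "\<And>x. x \<in> subalg sc GFm \<Longrightarrow> ?G x \<in> subalg sc GFm"
    unfolding tS_f0_def using conj_f[OF sub(4)] f0
    by (meson subalg.mult subalg_diff[OF se])
  define X where "X n = e 0 * e n - sc (q^2) * e n * e 0" for n
  have SX: "\<And>n. ?S (e n) = X n" unfolding S_e0_def X_def ke by simp
  have Xmem: "\<And>n. n < 0 \<Longrightarrow> X n \<in> subalg sc GEm"
  proof -
    fix n :: int assume n: "n < 0"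
    have r: "e (-1+1) * e n - sc (q^2) * e (-1) * e (n + 1)
            = sc (q^2) * e n * e (-1+1) - e (n + 1) * e (-1)" by (rule erel)
    have Xn: "X n = sc (q^2) * e (-1) * e (n + 1) - e (n + 1) * e (-1)"
      unfolding X_def using diff_swap[OF r] by simp
    show "X n \<in> subalg sc GEm"
    proof (cases "n = -1")
      case True
      then have h: "X n = - X n" using Xn unfolding X_def by simp
      have "X n + X n = - X n + X n" using arg_cong[OF h, of "\<lambda>z. z + X n"] by simp
      then have "X n + X n = 0" by simp
      then have "X n = 0" by (rule half_zero[OF se])
      then show ?thesis using subalg_zero[OF se] by simp
    next
      case False
      then have "n + 1 < 0" using n by simp
      then have g: "e (n+1) \<in> subalg sc GEm" "e (-1) \<in> subalg sc GEm"
        unfolding GEm_def by (auto intro: subalg.gen)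
      show ?thesis unfolding Xn using g
        by (meson subalg.mult subalg_smul subalg_diff[OF se])
    qed
  qed
  have TX: "\<And>n. ?T (e n) = - (sc p * X n)"
  proof -
    fix n
    have a: "e 0 * (sc p * e n) = sc p * (e 0 * e n)" by (metis central mult.assoc)
    have b: "sc p * (sc (q^2) * e n * e 0) = e n * e 0" by (metis mult.assoc mult_1_left pq(1))
    have "sc p * X n = sc p * (e 0 * e n) - e n * e 0" unfolding X_def using b by (simp add: right_diff_distrib)
    then show "?T (e n) = - (sc p * X n)" unfolding tS_e0_def kie a by simp
  qed
  have S_Em: "\<And>x. x \<in> subalg sc GEm \<Longrightarrow> ?S x \<in> subalg sc GEm"
  proof (rule deriv_pres[OF se Ssc(1) Sadd(1) Smul(1)])
    show "\<And>x. x \<in> subalg sc GEm \<Longrightarrow> k * x * kinv \<in> subalg sc GEm" using conj_e[OF sub(2)] by blast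
    show "\<And>x. x \<in> subalg sc GEm \<Longrightarrow> id x \<in> subalg sc GEm" by simp
    show "\<And>g. g \<in> GEm \<Longrightarrow> ?S g \<in> subalg sc GEm" using SX Xmem unfolding GEm_def by auto
  qed
  have T_Em: "\<And>x. x \<in> subalg sc GEm \<Longrightarrow> ?T x \<in> subalg sc GEm"
  proof (rule deriv_pres[OF se Ssc(2) Sadd(2) Smul(2)])
    show "\<And>x. x \<in> subalg sc GEm \<Longrightarrow> kinv * x * k \<in> subalg sc GEm" using conj_e[OF sub(2)] by blast
    show "\<And>x. x \<in> subalg sc GEm \<Longrightarrow> id x \<in> subalg sc GEm" by simp
    show "\<And>g. g \<in> GEm \<Longrightarrow> ?T g \<in> subalg sc GEm" using TX Xmem unfolding GEm_def
      by (auto simp del: minus_mult_left intro!: subalg_diff[OF se, of 0, simplified] subalg_zero[OF se] subalg_smul)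
  qed
  define Y where "Y n = f n * f 0 - sc p * f 0 * f n" for n
  have FY: "\<And>n. ?F (f n) = Y n"
  proof -
    fix n
    have a: "f 0 * (sc p * f n) = sc p * f 0 * f n" by (metis central mult.assoc)
    show "?F (f n) = Y n" unfolding S_f0_def Y_def kfp a ..
  qed
  have Ymem: "\<And>n. n > 0 \<Longrightarrow> Y n \<in> subalg sc GFp"
  proof -
    fix n :: int assume n: "n > 0"
    have r: "f (n - 1 + 1) * f 0 - sc p * f (n - 1) * f (0 + 1)
            = sc p * f 0 * f (n - 1 + 1) - f (0 + 1) * f (n - 1)" using frel unfolding p_def by blast
    have Yn: "Y n = sc p * f (n - 1) * f 1 - f 1 * f (n - 1)"
      unfolding Y_def using diff_swap[OF r] by simp
    show "Y n \<in> subalg sc GFp"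
    proof (cases "n = 1")
      case True
      then have h: "Y n = - Y n" using Yn unfolding Y_def by simp
      have "Y n + Y n = - Y n + Y n" using arg_cong[OF h, of "\<lambda>z. z + Y n"] by simp
      then have "Y n + Y n = 0" by simp
      then have "Y n = 0" by (rule half_zero[OF se])
      then show ?thesis using subalg_zero[OF se] by simp
    next
      case False
      then have "n - 1 > 0" using n by simp
      then have g: "f (n - 1) \<in> subalg sc GFp" "f 1 \<in> subalg sc GFp"
        unfolding GFp_def by (auto intro: subalg.gen)
      show ?thesis unfolding Yn using g
        by (meson subalg.mult subalg_smul subalg_diff[OF se])
    qed
  qed
  have GY: "\<And>n. ?G (f n) = - (sc (q^2) * Y n)"
  proof -
    fix n
    have b: "sc (q^2) * (sc p * f 0 * f n) = f 0 * f n" by (metis mult.assoc mult_1_left pq(2))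
    have "sc (q^2) * Y n = sc (q^2) * f n * f 0 - f 0 * f n" unfolding Y_def using b
      by (simp add: right_diff_distrib mult.assoc)
    then show "?G (f n) = - (sc (q^2) * Y n)" unfolding tS_f0_def kif by simp
  qed
  have F_Fp: "\<And>x. x \<in> subalg sc GFp \<Longrightarrow> ?F x \<in> subalg sc GFp"
  proof (rule deriv_pres[OF se Ssc(3) Sadd(3) Smul(3)])
    show "\<And>x. x \<in> subalg sc GFp \<Longrightarrow> k * x * kinv \<in> subalg sc GFp" using conj_f[OF sub(3)] by blast
    show "\<And>x. x \<in> subalg sc GFp \<Longrightarrow> id x \<in> subalg sc GFp" by simp
    show "\<And>g. g \<in> GFp \<Longrightarrow> ?F g \<in> subalg sc GFp" using FY Ymem unfolding GFp_def by auto
  qed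
  have G_Fp: "\<And>x. x \<in> subalg sc GFp \<Longrightarrow> ?G x \<in> subalg sc GFp"
  proof (rule deriv_pres[OF se Ssc(4) Sadd(4) Smul(4)])
    show "\<And>x. x \<in> subalg sc GFp \<Longrightarrow> kinv * x * k \<in> subalg sc GFp" using conj_f[OF sub(3)] by blast
    show "\<And>x. x \<in> subalg sc GFp \<Longrightarrow> id x \<in> subalg sc GFp" by simp
    show "\<And>g. g \<in> GFp \<Longrightarrow> ?G g \<in> subalg sc GFp" using GY Ymem unfolding GFp_def
      by (auto simp del: minus_mult_left intro!: subalg_diff[OF se, of 0, simplified] subalg_zero[OF se] subalg_smul)
  qed
  have iso_e': "mult_iso sc (subalg sc GEm) (subalg sc GEp) (subalg sc (range e))" using iso_e unfolding defs .
  have iso_f': "mult_iso sc (subalg sc GFm) (subalg sc GFp) (subalg sc (range f))" using iso_f unfolding defs .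
  have Pem': "is_proj_minus sc eps (subalg sc GEm) (subalg sc GEp) (subalg sc (range e)) Pem" using Pem unfolding defs .
  have Pep': "is_proj_plus sc eps (subalg sc GEm) (subalg sc GEp) (subalg sc (range e)) Pep" using Pep unfolding defs .
  have Pfm': "is_proj_minus sc eps (subalg sc GFm) (subalg sc GFp) (subalg sc (range f)) Pfm" using Pfm unfolding defs .
  have Pfp': "is_proj_plus sc eps (subalg sc GFm) (subalg sc GFp) (subalg sc (range f)) Pfp" using Pfp unfolding defs .
  have pkgS: "\<forall>x\<in>subalg sc (range e). Pem (?S x) = ?S (Pem x) \<and> Pep (?S x) = ?S (Pep x)"
    by (rule package[OF se sub(2) sub(1) iso_e' Pem' Pep' Sadd(1) Smul(1) Ssc(1) ksc(1) _ epsk(1) _ Seps(1) _ _ S_Em S_Ep])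
      (use conj_e[OF sub(2)] in auto)
  have pkgT: "\<forall>x\<in>subalg sc (range e). Pem (?T x) = ?T (Pem x) \<and> Pep (?T x) = ?T (Pep x)"
    by (rule package[OF se sub(2) sub(1) iso_e' Pem' Pep' Sadd(2) Smul(2) Ssc(2) _ ksc(2) _ epsk(2) Seps(2) _ _ T_Em T_Ep])
      (use conj_e[OF sub(1)] in auto)
  have pkgF: "\<forall>x\<in>subalg sc (range f). Pfm (?F x) = ?F (Pfm x) \<and> Pfp (?F x) = ?F (Pfp x)"
    by (rule package[OF se sub(4) sub(3) iso_f' Pfm' Pfp' Sadd(3) Smul(3) Ssc(3) _ ksc(1) _ epsk(1) Seps(3) _ _ F_Fm F_Fp])
      (use conj_f[OF sub(3)] in auto)
  have pkgG: "\<forall>x\<in>subalg sc (range f). Pfm (?G x) = ?G (Pfm x) \<and> Pfp (?G x) = ?G (Pfp x)"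
    by (rule package[OF se sub(4) sub(3) iso_f' Pfm' Pfp' Sadd(4) Smul(4) Ssc(4) ksc(2) _ epsk(2) _ Seps(4) _ _ G_Fm G_Fp])
      (use conj_f[OF sub(4)] in auto)
  show ?thesis unfolding defs
    using S_Ep T_Ep S_Em T_Em F_Fp G_Fp F_Fm G_Fm pkgS pkgT pkgF pkgG by blast
qed

end
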